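(* Suppose the kernel $k$ satisfies: for every $R>0$ there is $B_R$ with $\sup_{\|x\|\le R}\|\partial_{1,i}\partial_{1,j}k(x,\cdot)\|_{\mathcal H}\le B_R$ for all $i,j$. Let $R>0$, $\mathcal K=B(0,R)$, fix $\pi\in\mathcal P_2(\mathbb{R}^d)$ and $\lambda>0$. Then there exists $l_{\mathcal K}>0$ such that for all $\mu\in\mathcal P_2(\mathcal K)$ the map $\bm v_{\operatorname{MMD}}[\mu]$ is $l_{\mathcal K}$-Lipschitz on $\mathcal K$, and there exists $L_{\mathcal K}>0$ such that for all $\mu,\nu\in\mathcal P_2(\mathcal K)$, $\sup_{x\in\mathcal K}\|\bm v_{\operatorname{MMD}}[\mu](x)-\bm v_{\operatorname{MMD}}[\nu](x)\|\le L_{\mathcal K}W_2(\mu,\nu)$. The same two statements hold with $\bm v_{\operatorname{MMD}}[\mu]$ replaced by $\nabla f_{\mu,\pi}$.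
   Context: $k$ is a symmetric positive definite kernel on $\mathbb{R}^d$, sufficiently continuously differentiable, with RKHS $\mathcal H$; $\partial_{1,i}$ is the partial derivative in the $i$-th coordinate of the first argument, $\nabla_2$ the gradient in the second argument. $\mathcal P_2(\mathcal K)$ is the set of probability measures supported in $\mathcal K$; $W_2$ is the Wasserstein-2 distance. $\bm v_{\operatorname{MMD}}[\mu](y)=\int\nabla_2k(x,y)\,\mathrm d(\mu-\pi)(x)$. $m_\nu=\int k(x,\cdot)\mathrm d\nu(x)$; $S_\mu:\mathcal H\to\mathcal H$ satisfies $\langle f,S_\mu g\rangle_{\mathcal H}=\int\nabla f^\top\nabla g\,\mathrm d\mu$; $f_{\mu,\pi}=(S_\mu+\lambda\mathrm{Id})^{-1}(m_\mu-m_\pi)$. *)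

theory Defs
  imports "HOL-Analysis.Analysis" "HOL-Probability.Probability"
begin

text \<open>The RKHS H is modelled as an abstract (separable) real Hilbert space 'h together with a
  feature map Phi, k(x,y) = <Phi x, Phi y>, span of range Phi dense; elements f of H act as
  functions by f(x) = <f, Phi x> (reproducing property), and k(x,.) corresponds to Phi x.\<close>

definition kern :: "('a \<Rightarrow> 'h::real_inner) \<Rightarrow> 'a \<Rightarrow> 'a \<Rightarrow> real" where
  "kern Phi x y = inner (Phi x) (Phi y)"

definition ev :: "('a \<Rightarrow> 'h::real_inner) \<Rightarrow> 'h \<Rightarrow> 'a \<Rightarrow> real" where
  "ev Phi f x = inner f (Phi x)"

definition grad :: "('a::euclidean_space \<Rightarrow> real) \<Rightarrow> 'a \<Rightarrow> 'a" where
  "grad g x = (\<Sum>b\<in>Basis. frechet_derivative g (at x) b *\<^sub>R b)"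

definition P2 :: "'a::euclidean_space set \<Rightarrow> 'a measure set" where
  "P2 K = {\<mu>. prob_space \<mu> \<and> sets \<mu> = sets borel \<and> emeasure \<mu> K = 1
               \<and> integrable \<mu> (\<lambda>x. (norm x)\<^sup>2)}"

definition couplings :: "'a::euclidean_space measure \<Rightarrow> 'a measure \<Rightarrow> ('a \<times> 'a) measure set" where
  "couplings \<mu> \<nu> = {\<gamma>. prob_space \<gamma> \<and> sets \<gamma> = sets borel
                      \<and> distr \<gamma> borel fst = \<mu> \<and> distr \<gamma> borel snd = \<nu>}"

definition W2 :: "'a::euclidean_space measure \<Rightarrow> 'a measure \<Rightarrow> real" where
  "W2 \<mu> \<nu> = sqrt (enn2real (INF \<gamma>\<in>couplings \<mu> \<nu>.
                      \<integral>\<^sup>+ z. ennreal ((norm (fst z - snd z))\<^sup>2) \<partial>\<gamma>))"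

definition vMMD :: "('a::euclidean_space \<Rightarrow> 'h::real_inner) \<Rightarrow> 'a measure \<Rightarrow> 'a measure \<Rightarrow> 'a \<Rightarrow> 'a" where
  "vMMD Phi \<pi> \<mu> y = (\<integral>x. grad (kern Phi x) y \<partial>\<mu>) - (\<integral>x. grad (kern Phi x) y \<partial>\<pi>)"

definition kme :: "('a::euclidean_space \<Rightarrow> 'h::{real_inner,banach,second_countable_topology})
                     \<Rightarrow> 'a measure \<Rightarrow> 'h" where
  "kme Phi \<nu> = (\<integral>x. Phi x \<partial>\<nu>)"

definition Sop :: "('a::euclidean_space \<Rightarrow> 'h::real_inner) \<Rightarrow> 'a measure \<Rightarrow> 'h \<Rightarrow> 'h" where
  "Sop Phi \<mu> g = (THE h. \<forall>f. inner f h = (\<integral>x. grad (ev Phi f) x \<bullet> grad (ev Phi g) x \<partial>\<mu>))"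

definition fmp :: "('a::euclidean_space \<Rightarrow> 'h::{real_inner,banach,second_countable_topology})
                     \<Rightarrow> real \<Rightarrow> 'a measure \<Rightarrow> 'a measure \<Rightarrow> 'h" where
  "fmp Phi lam \<mu> \<pi> = inv (\<lambda>g. Sop Phi \<mu> g + lam *\<^sub>R g) (kme Phi \<mu> - kme Phi \<pi>)"

end

theory Submission
  imports Defs
begin

lemma P2_AE:
  assumes "m \<in> P2 K" "closed K"
  shows "AE x in m. x \<in> K"
proof -
  have ps: "prob_space m" using assms by (simp add: P2_def)
  have "measure m K = 1" using assms by (simp add: P2_def measure_def)
  then show ?thesis using prob_space.AE_prob_1[OF ps] by blast
qed

lemma P2_integrable:
  fixes a :: "'a::euclidean_space \<Rightarrow> 'b::{banach,second_countable_topology}"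
  assumes "m \<in> P2 K" "compact K" "continuous_on UNIV a"
  shows "integrable m a"
proof -
  have ps: "prob_space m" and s: "sets m = sets borel" using assms by (auto simp add: P2_def)
  obtain B where B: "\<forall>x\<in>K. norm (a x) \<le> B"
    using compact_imp_bounded[OF compact_continuous_image[OF continuous_on_subset[OF assms(3)] assms(2)]]
    by (auto simp: bounded_iff)
  have AE: "AE x in m. x \<in> K" using P2_AE assms compact_imp_closed by blast
  have meas: "a \<in> borel_measurable m"
    using borel_measurable_continuous_onI[OF assms(3)] measurable_cong_sets[OF s refl] by blast
  show ?thesis
    apply (rule finite_measure.integrable_const_bound[of m _ B])
    using ps prob_space_def apply blast
    using AE B apply (auto elim!: AE_mp)
    using meas by simp
qed


lemma coupling_facts:
  assumes g: "\<gamma> \<in> couplings \<mu> \<nu>"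
  shows "prob_space \<gamma>" "sets \<gamma> = sets borel" "fst \<in> measurable \<gamma> borel" "snd \<in> measurable \<gamma> borel"
    "\<mu> = distr \<gamma> borel fst" "\<nu> = distr \<gamma> borel snd"
proof -
  show s: "sets \<gamma> = sets borel" using g by (simp add: couplings_def)
  show "prob_space \<gamma>" using g by (simp add: couplings_def)
  show "fst \<in> measurable \<gamma> borel"
    using borel_measurable_continuous_onI[OF continuous_on_fst[OF continuous_on_id]] measurable_cong_sets[OF s refl] by blast
  show "snd \<in> measurable \<gamma> borel"
    using borel_measurable_continuous_onI[OF continuous_on_snd[OF continuous_on_id]] measurable_cong_sets[OF s refl] by blast
  show "\<mu> = distr \<gamma> borel fst" "\<nu> = distr \<gamma> borel snd" using g by (auto simp add: couplings_def)
qed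

lemma distr_pair_snd':
  assumes N: "prob_space N" and M: "prob_space M"
  shows "distr (N \<Otimes>\<^sub>M M) M snd = M"
proof (intro measure_eqI)
  interpret M: prob_space M by (rule M)
  fix A assume A: "A \<in> sets (distr (N \<Otimes>\<^sub>M M) M snd)"
  from A have "emeasure (distr (N \<Otimes>\<^sub>M M) M snd) A = emeasure (N \<Otimes>\<^sub>M M) (space N \<times> A)"
    by (auto simp add: emeasure_distr space_pair_measure dest: sets.sets_into_space intro!: arg_cong2[where f=emeasure])
  with A show "emeasure (distr (N \<Otimes>\<^sub>M M) M snd) A = emeasure M A"
    by (simp add: M.emeasure_pair_measure_Times prob_space.emeasure_space_1[OF N])
qed simp

lemma W2_bound:
  fixes a :: "'a::euclidean_space \<Rightarrow> 'b::{banach,second_countable_topology}"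
  assumes cont: "continuous_on UNIV a" and K: "compact K" and L: "L > 0"
   and lip: "\<forall>x\<in>K. \<forall>y\<in>K. norm (a x - a y) \<le> L * norm (x - y)"
   and mu: "\<mu> \<in> P2 K" and nu: "\<nu> \<in> P2 K"
  shows "norm (integral\<^sup>L \<mu> a - integral\<^sup>L \<nu> a) \<le> L * W2 \<mu> \<nu>"
proof -
  have cK: "closed K" using K compact_imp_closed by blast
  have ameas: "a \<in> borel_measurable borel" using borel_measurable_continuous_onI[OF cont] .
  obtain r where r: "\<forall>x\<in>K. norm x \<le> r" using compact_imp_bounded[OF K] by (auto simp: bounded_iff)
  define D where "D = norm (integral\<^sup>L \<mu> a - integral\<^sup>L \<nu> a)"
  define J where "J = (\<lambda>\<gamma>::('a\<times>'a) measure. \<integral>\<^sup>+ z. ennreal ((norm (fst z - snd z))\<^sup>2) \<partial>\<gamma>)"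
  have AEKK: "AE z in \<gamma>. fst z \<in> K \<and> snd z \<in> K" if g: "\<gamma> \<in> couplings \<mu> \<nu>" for \<gamma>
  proof -
    note cf = coupling_facts[OF g]
    have "AE x in distr \<gamma> borel fst. x \<in> K" using P2_AE[OF mu cK] by (simp only: cf(5)[symmetric])
    then have 1: "AE z in \<gamma>. fst z \<in> K" using AE_distr_iff[OF cf(3), of "\<lambda>x. x \<in> K"] cK by auto
    have "AE x in distr \<gamma> borel snd. x \<in> K" using P2_AE[OF nu cK] by (simp only: cf(6)[symmetric])
    then have 2: "AE z in \<gamma>. snd z \<in> K" using AE_distr_iff[OF cf(4), of "\<lambda>x. x \<in> K"] cK by auto
    show ?thesis using 1 2 by eventually_elim auto
  qed
  have key: "ennreal ((D / L)\<^sup>2) \<le> J \<gamma>" if g: "\<gamma> \<in> couplings \<mu> \<nu>" for \<gamma>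
  proof -
    note cf = coupling_facts[OF g]
    interpret prob_space \<gamma> by (rule cf(1))
    have fm: "(\<lambda>z. a (fst z)) \<in> borel_measurable \<gamma>" "(\<lambda>z. a (snd z)) \<in> borel_measurable \<gamma>"
      using measurable_comp[OF cf(3) ameas] measurable_comp[OF cf(4) ameas] by (auto simp: o_def)
    have i1: "integral\<^sup>L \<mu> a = (\<integral>z. a (fst z) \<partial>\<gamma>)"
      using cf(5) integral_distr[OF cf(3) ameas] by simp
    have i2: "integral\<^sup>L \<nu> a = (\<integral>z. a (snd z) \<partial>\<gamma>)"
      using cf(6) integral_distr[OF cf(4) ameas] by simp
    obtain B where B: "\<forall>x\<in>K. norm (a x) \<le> B"
      using compact_imp_bounded[OF compact_continuous_image[OF continuous_on_subset[OF cont] K]]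
      by (auto simp: bounded_iff)
    have int1: "integrable \<gamma> (\<lambda>z. a (fst z))"
      by (rule integrable_const_bound[of _ B]) (use AEKK[OF g] B fm in \<open>auto elim!: AE_mp\<close>)
    have int2: "integrable \<gamma> (\<lambda>z. a (snd z))"
      by (rule integrable_const_bound[of _ B]) (use AEKK[OF g] B fm in \<open>auto elim!: AE_mp\<close>)
    have f3[measurable]: "fst \<in> borel_measurable \<gamma>" "snd \<in> borel_measurable \<gamma>" using cf(3,4) .
    have dm: "(\<lambda>z. ennreal (norm (fst z - snd z))) \<in> borel_measurable \<gamma>"
      by measurable
    have "ennreal D \<le> (\<integral>\<^sup>+ z. norm (a (fst z) - a (snd z)) \<partial>\<gamma>)"
      unfolding D_def i1 i2 Bochner_Integration.integral_diff[OF int1 int2, symmetric]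
      by (rule integral_norm_bound_ennreal) (use int1 int2 in auto)
    also have "\<dots> \<le> (\<integral>\<^sup>+ z. ennreal L * ennreal (norm (fst z - snd z)) \<partial>\<gamma>)"
      apply (rule nn_integral_mono_AE)
      using AEKK[OF g] apply eventually_elim
      using lip L by (simp add: ennreal_mult[symmetric])
    also have "\<dots> = ennreal L * (\<integral>\<^sup>+ z. ennreal (norm (fst z - snd z)) \<partial>\<gamma>)"
      by (rule nn_integral_cmult) (rule dm)
    finally have 1: "ennreal D \<le> ennreal L * (\<integral>\<^sup>+ z. ennreal (norm (fst z - snd z)) \<partial>\<gamma>)" .
    have CS: "(\<integral>\<^sup>+ z. ennreal (norm (fst z - snd z)) * 1 \<partial>\<gamma>)\<^sup>2
        \<le> (\<integral>\<^sup>+ z. (ennreal (norm (fst z - snd z)))\<^sup>2 \<partial>\<gamma>) * (\<integral>\<^sup>+ z. 1 ^ 2 \<partial>\<gamma>)"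
      by (rule Cauchy_Schwarz_nn_integral) (use dm in auto)
    have "(\<integral>\<^sup>+ z. 1 ^ 2 \<partial>\<gamma>) = 1" by (simp add: emeasure_space_1)
    then have CS2: "(\<integral>\<^sup>+ z. ennreal (norm (fst z - snd z)) \<partial>\<gamma>)\<^sup>2 \<le> J \<gamma>"
      using CS by (simp add: J_def ennreal_power)
    have "(ennreal D)\<^sup>2 \<le> (ennreal L)\<^sup>2 * J \<gamma>"
    proof -
      have "(ennreal D)\<^sup>2 \<le> (ennreal L * (\<integral>\<^sup>+ z. ennreal (norm (fst z - snd z)) \<partial>\<gamma>))\<^sup>2"
        using 1 by (simp add: power_mono)
      also have "\<dots> = (ennreal L)\<^sup>2 * (\<integral>\<^sup>+ z. ennreal (norm (fst z - snd z)) \<partial>\<gamma>)\<^sup>2"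
        by (simp add: power_mult_distrib)
      also have "\<dots> \<le> (ennreal L)\<^sup>2 * J \<gamma>" using CS2 by (simp add: mult_left_mono)
      finally show ?thesis .
    qed
    then have "ennreal (L\<^sup>2) * ennreal ((D / L)\<^sup>2) \<le> ennreal (L\<^sup>2) * J \<gamma>"
      using L by (simp add: ennreal_power ennreal_mult[symmetric] power_divide D_def)
    then show ?thesis
      using L by (subst (asm) ennreal_mult_le_mult_iff) auto
  qed
  have ps_mu: "prob_space \<mu>" and s_mu: "sets \<mu> = sets borel"
    and ps_nu: "prob_space \<nu>" and s_nu: "sets \<nu> = sets borel" using mu nu by (auto simp: P2_def)
  define \<gamma>0 where "\<gamma>0 = \<mu> \<Otimes>\<^sub>M \<nu>"
  have g0: "\<gamma>0 \<in> couplings \<mu> \<nu>"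
  proof -
    have s0: "sets \<gamma>0 = sets borel"
      unfolding \<gamma>0_def using sets_pair_measure_cong[OF s_mu s_nu] borel_prod by metis
    have sp_mu: "space \<mu> = space borel" using s_mu sets_eq_imp_space_eq by blast
    have sp_nu: "space \<nu> = space borel" using s_nu sets_eq_imp_space_eq by blast
    have "distr \<gamma>0 borel fst = distr \<gamma>0 \<mu> fst"
      by (rule distr_cong) (auto simp: s_mu sp_mu)
    also have "\<dots> = \<mu>" unfolding \<gamma>0_def by (rule prob_space.distr_pair_fst[OF ps_nu])
    finally have 1: "distr \<gamma>0 borel fst = \<mu>" .
    have "distr \<gamma>0 borel snd = distr \<gamma>0 \<nu> snd"
      by (rule distr_cong) (auto simp: s_nu sp_nu)
    also have "\<dots> = \<nu>" unfolding \<gamma>0_def by (rule distr_pair_snd'[OF ps_mu ps_nu])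
    finally have 2: "distr \<gamma>0 borel snd = \<nu>" .
    show ?thesis unfolding couplings_def using 1 2 s0 prob_space_pair[OF ps_mu ps_nu] \<gamma>0_def by auto
  qed
  have fin: "J \<gamma>0 \<le> ennreal ((2 * r)\<^sup>2)"
  proof -
    interpret prob_space \<gamma>0 using coupling_facts[OF g0] by blast
    have "J \<gamma>0 \<le> (\<integral>\<^sup>+ z. ennreal ((2 * r)\<^sup>2) \<partial>\<gamma>0)"
      unfolding J_def
    proof (rule nn_integral_mono_AE)
      show "AE z in \<gamma>0. ennreal ((norm (fst z - snd z))\<^sup>2) \<le> ennreal ((2 * r)\<^sup>2)"
        using AEKK[OF g0]
      proof eventually_elim
        case (elim z)
        have "norm (fst z - snd z) \<le> 2 * r" proof -
          have "norm (fst z) \<le> r" "norm (snd z) \<le> r" using r elim by auto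
          then show ?thesis using norm_triangle_ineq4[of "fst z" "snd z"] by linarith
        qed
        then show ?case by (intro ennreal_leI power_mono) auto
      qed
    qed
    also have "\<dots> = ennreal ((2 * r)\<^sup>2)" by (simp add: emeasure_space_1)
    finally show ?thesis .
  qed
  define I where "I = (INF \<gamma>\<in>couplings \<mu> \<nu>. J \<gamma>)"
  have "ennreal ((D / L)\<^sup>2) \<le> I" unfolding I_def by (rule INF_greatest) (rule key)
  moreover have "I < top"
    using INF_lower[OF g0, of J] fin unfolding I_def
    by (metis ennreal_less_top order.strict_trans1)
  ultimately have "enn2real (ennreal ((D / L)\<^sup>2)) \<le> enn2real I" by (rule enn2real_mono)
  then have "(D / L)\<^sup>2 \<le> enn2real I" by simp
  then have "sqrt ((D / L)\<^sup>2) \<le> sqrt (enn2real I)" by (rule real_sqrt_le_mono)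
  moreover have "W2 \<mu> \<nu> = sqrt (enn2real I)" unfolding W2_def I_def J_def by simp
  ultimately have "D / L \<le> W2 \<mu> \<nu>" using L by (simp add: D_def)
  then show ?thesis using L by (simp add: D_def field_simps)
qed


definition Gm :: "('a::euclidean_space \<Rightarrow>\<^sub>L 'h::real_inner) \<Rightarrow> 'h \<Rightarrow> 'a" where
  "Gm A f = (\<Sum>b\<in>Basis. inner f (blinfun_apply A b) *\<^sub>R b)"

lemma grad_ev:
  assumes "\<And>x. (Phi has_derivative blinfun_apply (DPhi x)) (at x)"
  shows "grad (ev Phi f) x = Gm (DPhi x) f"
proof -
  have "(ev Phi f has_derivative (\<lambda>v. inner f (blinfun_apply (DPhi x) v))) (at x)"
    unfolding ev_def[abs_def] using assms[of x] by (auto intro!: derivative_eq_intros)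
  from frechet_derivative_at[OF this] show ?thesis
    unfolding grad_def Gm_def by (metis (no_types, lifting))
qed

lemma kern_ev: "kern Phi x = ev Phi (Phi x)"
  by (simp add: kern_def ev_def fun_eq_iff)

lemma Gm_norm: "norm (Gm A f) \<le> real DIM('a) * norm A * norm f" for A :: "'a::euclidean_space \<Rightarrow>\<^sub>L 'h::real_inner"
proof -
  have "norm (Gm A f) \<le> (\<Sum>b\<in>(Basis::'a set). norm (inner f (blinfun_apply A b) *\<^sub>R b))"
    unfolding Gm_def by (rule norm_sum)
  also have "\<dots> \<le> (\<Sum>b\<in>(Basis::'a set). norm A * norm f)"
  proof (rule sum_mono)
    fix b :: 'a assume b: "b \<in> Basis"
    have "norm (inner f (blinfun_apply A b) *\<^sub>R b) = \<bar>inner f (blinfun_apply A b)\<bar>" using b by simp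
    also have "\<dots> \<le> norm f * norm (blinfun_apply A b)" by (rule Cauchy_Schwarz_ineq2)
    also have "\<dots> \<le> norm f * (norm A * norm b)" by (intro mult_left_mono norm_blinfun) auto
    finally show "norm (inner f (blinfun_apply A b) *\<^sub>R b) \<le> norm A * norm f" using b by (simp add: mult.commute)
  qed
  also have "\<dots> = real DIM('a) * norm A * norm f" by simp
  finally show ?thesis .
qed

lemma Gm_diff_left: "Gm A f - Gm B f = Gm (A - B) f"
  by (simp add: Gm_def blinfun.diff_left inner_diff_right scaleR_diff_left sum_subtractf)

lemma Gm_diff_right: "Gm A f - Gm A g = Gm A (f - g)"
  by (simp add: Gm_def inner_diff_left scaleR_diff_left sum_subtractf)

lemma Gm_linear: "bounded_linear (Gm A)"
proof -
  have "linear (Gm A)"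
    by (rule linearI) (simp_all add: Gm_def inner_add_left scaleR_add_left sum.distrib scaleR_sum_right)
  moreover have "\<exists>K. \<forall>f. norm (Gm A f) \<le> norm f * K"
    using Gm_norm[of A] by (metis mult.commute)
  ultimately show ?thesis by (simp add: bounded_linear_axioms_def bounded_linear_def)
qed

lemma Gm_adj: "Gm A f \<bullet> v = inner f (blinfun_apply A v)"
proof -
  have "blinfun_apply A v = blinfun_apply A (\<Sum>b\<in>Basis. (v \<bullet> b) *\<^sub>R b)" by (simp add: euclidean_representation)
  also have "\<dots> = (\<Sum>b\<in>Basis. (v \<bullet> b) *\<^sub>R blinfun_apply A b)"
    by (simp add: blinfun.sum_right blinfun.scaleR_right)
  finally have "inner f (blinfun_apply A v) = (\<Sum>b\<in>Basis. (v \<bullet> b) * inner f (blinfun_apply A b))"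
    by (simp add: inner_sum_right)
  moreover have "Gm A f \<bullet> v = (\<Sum>b\<in>Basis. inner f (blinfun_apply A b) * (b \<bullet> v))"
    by (simp add: Gm_def inner_sum_left)
  ultimately show ?thesis by (simp add: inner_commute mult.commute)
qed

lemma cont_apply:
  fixes D :: "'a::euclidean_space \<Rightarrow> 'a \<Rightarrow>\<^sub>L 'h::real_normed_vector"
  assumes "continuous_on UNIV D" "continuous_on UNIV v"
  shows "continuous_on UNIV (\<lambda>x. blinfun_apply (D x) (v x))"
  using blinfun.continuous_on[OF assms] .

lemma cont_Gm:
  fixes D :: "'a::euclidean_space \<Rightarrow> 'a \<Rightarrow>\<^sub>L 'h::real_inner"
  assumes "continuous_on UNIV D" "continuous_on UNIV f"
  shows "continuous_on UNIV (\<lambda>x. Gm (D x) (f x))"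
  unfolding Gm_def
  by (intro continuous_intros cont_apply assms)


lemma solve_exists:
  fixes S :: "'h::{real_inner,banach} \<Rightarrow> 'h"
  assumes lin: "\<And>u v. S (u - v) = S u - S v" and bnd: "\<And>u. norm (S u) \<le> C * norm u"
    and pos: "\<And>u. inner u (S u) \<ge> 0" and lam: "lam > 0" and C: "C \<ge> 0"
  shows "\<exists>u. S u + lam *\<^sub>R u = m"
proof -
  define c where "c = C + lam"
  have c: "c > 0" "lam \<le> c" using C lam by (auto simp: c_def)
  define t where "t = lam / c\<^sup>2"
  have t: "t > 0" using lam c by (simp add: t_def)
  define T where "T = (\<lambda>u. S u + lam *\<^sub>R u)"
  define F where "F = (\<lambda>u. u - t *\<^sub>R (T u - m))"
  define k where "k = sqrt (1 - lam\<^sup>2 / c\<^sup>2)"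
  have lam2: "lam\<^sup>2 / c\<^sup>2 \<le> 1" using c lam by (simp add: divide_le_eq_1 power_mono)
  have lam2p: "lam\<^sup>2 / c\<^sup>2 > 0" using c lam by simp
  have k0: "0 \<le> k" using lam2 by (simp add: k_def)
  have k1: "k < 1" using lam2 lam2p by (simp add: k_def)
  have Tlin: "T (u - v) = T u - T v" for u v by (simp add: T_def lin scaleR_diff_right)
  have Tbnd: "norm (T w) \<le> c * norm w" for w
  proof -
    have "norm (T w) \<le> norm (S w) + norm (lam *\<^sub>R w)" unfolding T_def by (rule norm_triangle_ineq)
    also have "\<dots> \<le> C * norm w + lam * norm w" using bnd[of w] lam by simp
    finally show ?thesis by (simp add: c_def algebra_simps)
  qed
  have Tpos: "inner w (T w) \<ge> lam * (norm w)\<^sup>2" for w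
    using pos[of w] by (simp add: T_def inner_add_right power2_norm_eq_inner)
  have contr: "norm (w - t *\<^sub>R T w) \<le> k * norm w" for w
  proof -
    have e: "(norm (w - t *\<^sub>R T w))\<^sup>2 = (norm w)\<^sup>2 - 2 * t * inner w (T w) + t\<^sup>2 * (norm (T w))\<^sup>2"
    proof -
      have "inner (w - t *\<^sub>R T w) (w - t *\<^sub>R T w) = inner w w - t * inner w (T w) - t * inner (T w) w + t * t * inner (T w) (T w)"
        by (simp add: inner_diff_left inner_diff_right algebra_simps)
      then show ?thesis unfolding power2_norm_eq_inner by (simp add: inner_commute[of "T w" w] power2_eq_square)
    qed
    have a: "2 * t * inner w (T w) \<ge> 2 * t * (lam * (norm w)\<^sup>2)" using Tpos[of w] t by simp
    have b: "(norm (T w))\<^sup>2 \<le> (c * norm w)\<^sup>2" using Tbnd[of w] by (simp add: power_mono)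
    have "t\<^sup>2 * (norm (T w))\<^sup>2 \<le> t\<^sup>2 * (c * norm w)\<^sup>2" using b by (simp add: mult_left_mono)
    then have "(norm (w - t *\<^sub>R T w))\<^sup>2 \<le> (norm w)\<^sup>2 - 2 * t * (lam * (norm w)\<^sup>2) + t\<^sup>2 * (c * norm w)\<^sup>2"
      using e a by linarith
    also have "\<dots> = (1 - lam\<^sup>2 / c\<^sup>2) * (norm w)\<^sup>2"
      using c by (simp add: t_def field_simps power2_eq_square)
    also have "\<dots> = (k * norm w)\<^sup>2" using lam2 by (simp add: k_def power_mult_distrib)
    finally have sq: "(norm (w - t *\<^sub>R T w))\<^sup>2 \<le> (k * norm w)\<^sup>2" .
    show ?thesis by (rule power2_le_imp_le[OF sq]) (simp add: k0)
  qed
  have "\<forall>x y. dist (F x) (F y) \<le> k * dist x y"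
  proof (intro allI)
    fix x y
    have "F x - F y = (x - y) - t *\<^sub>R T (x - y)"
      by (simp add: F_def Tlin algebra_simps)
    then show "dist (F x) (F y) \<le> k * dist x y" using contr[of "x - y"] by (simp add: dist_norm)
  qed
  then obtain u where "F u = u" using banach_fix_type[OF k0 k1] by blast
  then have "t *\<^sub>R (T u - m) = 0" by (simp add: F_def)
  then have "T u = m" using t by simp
  then show ?thesis unfolding T_def by blast
qed

lemma norm_integral_le_AE:
  fixes h :: "'x \<Rightarrow> 'b::{banach,second_countable_topology}"
  assumes "prob_space M" "integrable M h" "AE x in M. norm (h x) \<le> B"
  shows "norm (integral\<^sup>L M h) \<le> B"
proof -
  interpret prob_space M by fact
  have "norm (integral\<^sup>L M h) \<le> (\<integral>x. norm (h x) \<partial>M)" by (rule integral_norm_bound)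
  also have "\<dots> \<le> (\<integral>x. B \<partial>M)"
    by (rule integral_mono_AE) (use assms in auto)
  also have "\<dots> = B" by (simp add: prob_space)
  finally show ?thesis .
qed


definition Sexp :: "('a::euclidean_space \<Rightarrow> ('a \<Rightarrow>\<^sub>L 'h::{real_inner,banach,second_countable_topology})) \<Rightarrow> 'a measure \<Rightarrow> 'h \<Rightarrow> 'h" where
  "Sexp DPhi \<mu> g = (\<integral>x. blinfun_apply (DPhi x) (Gm (DPhi x) g) \<partial>\<mu>)"

lemma Sexp_int:
  fixes DPhi :: "'a::euclidean_space \<Rightarrow> ('a \<Rightarrow>\<^sub>L 'h::{real_inner,banach,second_countable_topology})"
  assumes cD: "continuous_on UNIV DPhi" and K: "compact K" and mu: "\<mu> \<in> P2 K"
  shows "integrable \<mu> (\<lambda>x. blinfun_apply (DPhi x) (Gm (DPhi x) g))"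
  by (rule P2_integrable[OF mu K]) (intro cont_apply cD cont_Gm continuous_on_const)

lemma Sop_eq:
  fixes Phi :: "'a::euclidean_space \<Rightarrow> 'h::{real_inner,banach,second_countable_topology}"
  assumes D1: "\<And>x. (Phi has_derivative blinfun_apply (DPhi x)) (at x)"
    and cD: "continuous_on UNIV DPhi" and K: "compact K" and mu: "\<mu> \<in> P2 K"
  shows "Sop Phi \<mu> g = Sexp DPhi \<mu> g"
proof -
  have ch: "inner f (Sexp DPhi \<mu> g) = (\<integral>x. grad (ev Phi f) x \<bullet> grad (ev Phi g) x \<partial>\<mu>)" for f
  proof -
    have "inner f (Sexp DPhi \<mu> g) = (\<integral>x. inner f (blinfun_apply (DPhi x) (Gm (DPhi x) g)) \<partial>\<mu>)"
      unfolding Sexp_def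
      by (rule integral_bounded_linear[OF bounded_linear_inner_right Sexp_int[OF cD K mu], symmetric])
    also have "\<dots> = (\<integral>x. grad (ev Phi f) x \<bullet> grad (ev Phi g) x \<partial>\<mu>)"
      by (simp add: grad_ev[OF D1] Gm_adj)
    finally show ?thesis .
  qed
  show ?thesis unfolding Sop_def
  proof (rule the_equality)
    show "\<forall>f. inner f (Sexp DPhi \<mu> g) = (\<integral>x. grad (ev Phi f) x \<bullet> grad (ev Phi g) x \<partial>\<mu>)" using ch by blast
  next
    fix h assume h: "\<forall>f. inner f h = (\<integral>x. grad (ev Phi f) x \<bullet> grad (ev Phi g) x \<partial>\<mu>)"
    have "inner (h - Sexp DPhi \<mu> g) (h - Sexp DPhi \<mu> g) = 0"
      using h[rule_format, of "h - Sexp DPhi \<mu> g"] ch[of "h - Sexp DPhi \<mu> g"] by (simp add: inner_diff_right)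
    then show "h = Sexp DPhi \<mu> g" by simp
  qed
qed

lemma Sexp_lin:
  fixes DPhi :: "'a::euclidean_space \<Rightarrow> ('a \<Rightarrow>\<^sub>L 'h::{real_inner,banach,second_countable_topology})"
  assumes cD: "continuous_on UNIV DPhi" and K: "compact K" and mu: "\<mu> \<in> P2 K"
  shows "Sexp DPhi \<mu> (u - v) = Sexp DPhi \<mu> u - Sexp DPhi \<mu> v"
proof -
  have "Sexp DPhi \<mu> u - Sexp DPhi \<mu> v = (\<integral>x. blinfun_apply (DPhi x) (Gm (DPhi x) u) - blinfun_apply (DPhi x) (Gm (DPhi x) v) \<partial>\<mu>)"
    unfolding Sexp_def by (rule Bochner_Integration.integral_diff[OF Sexp_int[OF cD K mu] Sexp_int[OF cD K mu], symmetric])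
  also have "\<dots> = Sexp DPhi \<mu> (u - v)"
    unfolding Sexp_def by (simp add: blinfun.diff_right Gm_diff_right[symmetric])
  finally show ?thesis by simp
qed

lemma Sexp_pos:
  fixes DPhi :: "'a::euclidean_space \<Rightarrow> ('a \<Rightarrow>\<^sub>L 'h::{real_inner,banach,second_countable_topology})"
  assumes cD: "continuous_on UNIV DPhi" and K: "compact K" and mu: "\<mu> \<in> P2 K"
  shows "inner u (Sexp DPhi \<mu> u) \<ge> 0"
proof -
  have "inner u (Sexp DPhi \<mu> u) = (\<integral>x. inner u (blinfun_apply (DPhi x) (Gm (DPhi x) u)) \<partial>\<mu>)"
    unfolding Sexp_def
    by (rule integral_bounded_linear[OF bounded_linear_inner_right Sexp_int[OF cD K mu], symmetric])
  also have "\<dots> = (\<integral>x. Gm (DPhi x) u \<bullet> Gm (DPhi x) u \<partial>\<mu>)" by (simp add: Gm_adj)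
  also have "\<dots> \<ge> 0" by (rule Bochner_Integration.integral_nonneg) simp
  finally show ?thesis .
qed

lemma Sexp_bnd:
  fixes DPhi :: "'a::euclidean_space \<Rightarrow> ('a \<Rightarrow>\<^sub>L 'h::{real_inner,banach,second_countable_topology})"
  assumes cD: "continuous_on UNIV DPhi" and K: "compact K" and mu: "\<mu> \<in> P2 K"
    and M1: "\<forall>x\<in>K. norm (DPhi x) \<le> M1"
  shows "norm (Sexp DPhi \<mu> u) \<le> (M1 * real DIM('a) * M1) * norm u"
  unfolding Sexp_def
proof (rule norm_integral_le_AE)
  show "prob_space \<mu>" using mu by (simp add: P2_def)
  show "integrable \<mu> (\<lambda>x. blinfun_apply (DPhi x) (Gm (DPhi x) u))" by (rule Sexp_int[OF cD K mu])
  show "AE x in \<mu>. norm (blinfun_apply (DPhi x) (Gm (DPhi x) u)) \<le> M1 * real DIM('a) * M1 * norm u"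
    using P2_AE[OF mu compact_imp_closed[OF K]]
  proof eventually_elim
    case (elim x)
    have m: "norm (DPhi x) \<le> M1" using M1 elim by auto
    have "norm (blinfun_apply (DPhi x) (Gm (DPhi x) u)) \<le> norm (DPhi x) * norm (Gm (DPhi x) u)" by (rule norm_blinfun)
    also have "\<dots> \<le> M1 * (real DIM('a) * M1 * norm u)"
    proof (rule mult_mono)
      show "norm (Gm (DPhi x) u) \<le> real DIM('a) * M1 * norm u"
        using Gm_norm[of "DPhi x" u] m
        by (smt (verit, best) mult_right_mono norm_ge_zero of_nat_0_le_iff mult_left_mono)
    qed (use m in \<open>auto intro: order_trans[OF norm_ge_zero]\<close>)
    finally show ?case by (simp add: mult.assoc)
  qed
qed


lemma cont_from_deriv:
  assumes "\<And>x. (f has_derivative f' x) (at x)"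
  shows "continuous_on UNIV f"
  using assms has_derivative_continuous continuous_at_imp_continuous_on by blast

lemma bound_on_compact:
  fixes f :: "'a::metric_space \<Rightarrow> 'b::real_normed_vector"
  assumes "continuous_on UNIV f" "compact K"
  shows "\<exists>M>0. \<forall>x\<in>K. norm (f x) \<le> M"
  using compact_imp_bounded[OF compact_continuous_image[OF continuous_on_subset[OF assms(1)] assms(2)]]
  by (auto simp: bounded_pos)

lemma lip_from_deriv:
  fixes f :: "'a::euclidean_space \<Rightarrow> 'b::real_normed_vector"
  assumes "\<And>x. (f has_derivative blinfun_apply (Df x)) (at x)" "convex K"
    "\<forall>x\<in>K. norm (Df x) \<le> M" "x \<in> K" "y \<in> K"
  shows "norm (f x - f y) \<le> M * norm (x - y)"
proof (rule differentiable_bound[OF assms(2) _ _ assms(4,5)])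
  show "(f has_derivative blinfun_apply (Df z)) (at z within K)" if "z \<in> K" for z
    using assms(1) has_derivative_at_withinI by blast
  show "onorm (blinfun_apply (Df z)) \<le> M" if "z \<in> K" for z
    using assms(3) that by (simp add: norm_blinfun.rep_eq[symmetric])
qed

lemma Gm_lip:
  fixes DPhi :: "'a::euclidean_space \<Rightarrow> ('a \<Rightarrow>\<^sub>L 'h::real_inner)"
  assumes "norm (DPhi x - DPhi y) \<le> M2 * norm (x - y)" "M2 \<ge> 0"
  shows "norm (Gm (DPhi x) v - Gm (DPhi y) v) \<le> real DIM('a) * M2 * norm v * norm (x - y)"
proof -
  have "norm (Gm (DPhi x) v - Gm (DPhi y) v) = norm (Gm (DPhi x - DPhi y) v)" by (simp add: Gm_diff_left)
  also have "\<dots> \<le> real DIM('a) * norm (DPhi x - DPhi y) * norm v" by (rule Gm_norm)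
  also have "\<dots> \<le> real DIM('a) * (M2 * norm (x - y)) * norm v"
    using assms by (intro mult_right_mono mult_left_mono) auto
  finally show ?thesis by (simp add: ac_simps)
qed


lemma scale_le:
  fixes a b c n :: real
  assumes "a \<le> b" "0 \<le> c" "0 \<le> n"
  shows "c * a * n \<le> (c * b + 1) * n"
proof -
  have "c * a \<le> c * b + 1" using mult_left_mono[OF assms(1,2)] by linarith
  then show ?thesis using assms(3) by (rule mult_right_mono)
qed

theorem lemma9:
  fixes Phi :: "'a::euclidean_space \<Rightarrow> 'h::{real_inner,banach,second_countable_topology}"
    and DPhi :: "'a \<Rightarrow> ('a \<Rightarrow>\<^sub>L 'h)"
    and D2Phi :: "'a \<Rightarrow> ('a \<Rightarrow>\<^sub>L ('a \<Rightarrow>\<^sub>L 'h))"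
    and \<pi> :: "'a measure" and R lam :: real
  assumes dense: "closure (span (range Phi)) = UNIV"
    and D1: "\<And>x. (Phi has_derivative blinfun_apply (DPhi x)) (at x)"
    and D2: "\<And>x. (DPhi has_derivative blinfun_apply (D2Phi x)) (at x)"
    and D2cont: "continuous_on UNIV D2Phi"
    and bound: "\<forall>r>0. \<exists>B. \<forall>x. norm x \<le> r \<longrightarrow>
                  (\<forall>i\<in>Basis. \<forall>j\<in>Basis. norm (D2Phi x i j) \<le> B)"
    and R: "R > 0"
    and pi: "\<pi> \<in> P2 UNIV"
    and pi_int: "integrable \<pi> Phi"
    and lam: "lam > 0"
  shows "(\<exists>l>0. \<forall>\<mu>\<in>P2 (cball 0 R). l-lipschitz_on (cball 0 R) (vMMD Phi \<pi> \<mu>))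
       \<and> (\<exists>L>0. \<forall>\<mu>\<in>P2 (cball 0 R). \<forall>\<nu>\<in>P2 (cball 0 R). \<forall>x\<in>cball 0 R.
              norm (vMMD Phi \<pi> \<mu> x - vMMD Phi \<pi> \<nu> x) \<le> L * W2 \<mu> \<nu>)
       \<and> (\<exists>l>0. \<forall>\<mu>\<in>P2 (cball 0 R).
              l-lipschitz_on (cball 0 R) (grad (ev Phi (fmp Phi lam \<mu> \<pi>))))
       \<and> (\<exists>L>0. \<forall>\<mu>\<in>P2 (cball 0 R). \<forall>\<nu>\<in>P2 (cball 0 R). \<forall>x\<in>cball 0 R.
              norm (grad (ev Phi (fmp Phi lam \<mu> \<pi>)) x - grad (ev Phi (fmp Phi lam \<nu> \<pi>)) x)
                \<le> L * W2 \<mu> \<nu>)"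
proof -
  define K :: "'a set" where "K = cball 0 R"
  have K: "compact K" "convex K" unfolding K_def by auto
  have cD: "continuous_on UNIV DPhi" using cont_from_deriv[OF D2] .
  have cPhi: "continuous_on UNIV Phi" using cont_from_deriv[OF D1] .
  obtain M0 where M0: "M0 > 0" "\<forall>x\<in>K. norm (Phi x) \<le> M0" using bound_on_compact[OF cPhi K(1)] by blast
  obtain M1 where M1: "M1 > 0" "\<forall>x\<in>K. norm (DPhi x) \<le> M1" using bound_on_compact[OF cD K(1)] by blast
  obtain M2 where M2: "M2 > 0" "\<forall>x\<in>K. norm (D2Phi x) \<le> M2" using bound_on_compact[OF D2cont K(1)] by blast
  have LipD: "norm (DPhi x - DPhi y) \<le> M2 * norm (x - y)" if "x \<in> K" "y \<in> K" for x y
    by (rule lip_from_deriv[OF D2 K(2) M2(2) that])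
  have LipPhi: "\<forall>x\<in>K. \<forall>y\<in>K. norm (Phi x - Phi y) \<le> M1 * norm (x - y)"
    using lip_from_deriv[OF D1 K(2) M1(2)] by blast
  define mpi where "mpi = kme Phi \<pi>"
  define dd where "dd = real DIM('a)"
  have dd: "dd > 0" by (simp add: dd_def)
  have kme_bnd: "norm (kme Phi \<mu>) \<le> M0" if mu: "\<mu> \<in> P2 K" for \<mu>
    unfolding kme_def
  proof (rule norm_integral_le_AE)
    show "prob_space \<mu>" using mu by (simp add: P2_def)
    show "integrable \<mu> Phi" by (rule P2_integrable[OF mu K(1) cPhi])
    show "AE x in \<mu>. norm (Phi x) \<le> M0"
      using P2_AE[OF mu compact_imp_closed[OF K(1)]] M0 by (auto elim!: AE_mp)
  qed
  define B where "B = M0 + norm mpi"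
  have B: "B > 0" using M0 by (simp add: B_def add_pos_nonneg)
  have mdiff: "norm (kme Phi \<mu> - mpi) \<le> B" if "\<mu> \<in> P2 K" for \<mu>
    using kme_bnd[OF that] norm_triangle_ineq4[of "kme Phi \<mu>" mpi] by (simp add: B_def)
  have int_grad: "(\<integral>x. grad (kern Phi x) y \<partial>m) = Gm (DPhi y) (kme Phi m)" if "integrable m Phi" for m y
  proof -
    have "(\<integral>x. grad (kern Phi x) y \<partial>m) = (\<integral>x. Gm (DPhi y) (Phi x) \<partial>m)"
      by (simp add: kern_ev grad_ev[OF D1])
    also have "\<dots> = Gm (DPhi y) (kme Phi m)"
      unfolding kme_def by (rule integral_bounded_linear[OF Gm_linear that])
    finally show ?thesis .
  qed
  have vMMD_eq: "vMMD Phi \<pi> \<mu> y = Gm (DPhi y) (kme Phi \<mu> - mpi)" if "\<mu> \<in> P2 K" for \<mu> y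
    unfolding vMMD_def mpi_def
    using int_grad[OF P2_integrable[OF that K(1) cPhi]] int_grad[OF pi_int] Gm_diff_right by metis
  have fmp_eq: "Sexp DPhi \<mu> (fmp Phi lam \<mu> \<pi>) + lam *\<^sub>R fmp Phi lam \<mu> \<pi> = kme Phi \<mu> - mpi"
    if mu: "\<mu> \<in> P2 K" for \<mu>
  proof -
    have C0: "0 \<le> M1 * real DIM('a) * M1" using M1(1) by simp
    have Seq: "Sop Phi \<mu> = Sexp DPhi \<mu>" by (rule ext) (rule Sop_eq[OF D1 cD K(1) mu])
    have "\<exists>u. Sexp DPhi \<mu> u + lam *\<^sub>R u = kme Phi \<mu> - mpi"
      by (rule solve_exists[OF Sexp_lin[OF cD K(1) mu] Sexp_bnd[OF cD K(1) mu M1(2)] Sexp_pos[OF cD K(1) mu] lam])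
        (rule C0)
    then obtain u where u: "Sexp DPhi \<mu> u + lam *\<^sub>R u = kme Phi \<mu> - mpi" by (elim exE)
    have rg: "kme Phi \<mu> - mpi \<in> range (\<lambda>g. Sexp DPhi \<mu> g + lam *\<^sub>R g)"
      using u[symmetric] by (rule image_eqI) simp
    have fe: "fmp Phi lam \<mu> \<pi> = inv (\<lambda>g. Sexp DPhi \<mu> g + lam *\<^sub>R g) (kme Phi \<mu> - mpi)"
      unfolding fmp_def Seq mpi_def ..
    have "(\<lambda>g. Sexp DPhi \<mu> g + lam *\<^sub>R g) (fmp Phi lam \<mu> \<pi>) = kme Phi \<mu> - mpi"
      unfolding fe by (rule f_inv_into_f[OF rg])
    then show ?thesis by simp
  qed
  have coerc: "lam * (norm u)\<^sup>2 \<le> inner u (Sexp DPhi \<mu> u + lam *\<^sub>R u)" if mu: "\<mu> \<in> P2 K" for \<mu> u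
    using Sexp_pos[OF cD K(1) mu, of u] by (simp add: inner_add_right power2_norm_eq_inner)
  have solve_bnd: "lam * norm u \<le> norm (Sexp DPhi \<mu> u + lam *\<^sub>R u)" if mu: "\<mu> \<in> P2 K" for \<mu> u
  proof (cases "u = 0")
    case True then show ?thesis by simp
  next
    case False
    have "lam * (norm u)\<^sup>2 \<le> norm u * norm (Sexp DPhi \<mu> u + lam *\<^sub>R u)"
      using coerc[OF mu, of u] Cauchy_Schwarz_ineq2[of u "Sexp DPhi \<mu> u + lam *\<^sub>R u"] by linarith
    then show ?thesis using False by (simp add: power2_eq_square mult.assoc mult.commute[of lam])
  qed
  define Bf where "Bf = B / lam"
  have Bf: "Bf > 0" using B lam by (simp add: Bf_def)
  have fmp_bnd: "norm (fmp Phi lam \<mu> \<pi>) \<le> Bf" if mu: "\<mu> \<in> P2 K" for \<mu>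
    using solve_bnd[OF mu, of "fmp Phi lam \<mu> \<pi>"] fmp_eq[OF mu] mdiff[OF mu] lam
    by (simp add: Bf_def pos_le_divide_eq mult.commute)
  have grad_f: "grad (ev Phi f) = (\<lambda>x. Gm (DPhi x) f)" for f
    using grad_ev[OF D1] by blast
  have P1: "\<exists>l>0. \<forall>\<mu>\<in>P2 K. l-lipschitz_on K (vMMD Phi \<pi> \<mu>)"
  proof (intro exI[of _ "dd * M2 * B + 1"] conjI ballI)
    show "dd * M2 * B + 1 > 0" using dd M2 B by (simp add: add_pos_nonneg)
    fix \<mu> assume mu: "\<mu> \<in> P2 K"
    show "(dd * M2 * B + 1)-lipschitz_on K (vMMD Phi \<pi> \<mu>)"
    proof (rule lipschitz_onI)
      fix x y assume xy: "x \<in> K" "y \<in> K"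
      have "dist (vMMD Phi \<pi> \<mu> x) (vMMD Phi \<pi> \<mu> y) \<le> dd * M2 * norm (kme Phi \<mu> - mpi) * norm (x - y)"
        unfolding dist_norm vMMD_eq[OF mu] dd_def using Gm_lip[OF LipD[OF xy]] M2 by simp
      also have "\<dots> \<le> (dd * M2 * B + 1) * dist x y"
        unfolding dist_norm by (rule scale_le[OF mdiff[OF mu]]) (use dd M2 in auto)
      finally show "dist (vMMD Phi \<pi> \<mu> x) (vMMD Phi \<pi> \<mu> y) \<le> (dd * M2 * B + 1) * dist x y" .
    qed (use dd M2 B in simp)
  qed
  have W2nn: "W2 \<mu> \<nu> \<ge> 0" for \<mu> \<nu> by (simp add: W2_def)
  have kme_lip: "norm (kme Phi \<mu> - kme Phi \<nu>) \<le> M1 * W2 \<mu> \<nu>" if "\<mu> \<in> P2 K" "\<nu> \<in> P2 K" for \<mu> \<nu>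
    unfolding kme_def by (rule W2_bound[OF cPhi K(1) M1(1) LipPhi that])
  have Gm_bnd: "norm (Gm (DPhi x) v) \<le> dd * M1 * norm v" if "x \<in> K" for x v
  proof -
    have "norm (Gm (DPhi x) v) \<le> dd * norm (DPhi x) * norm v" unfolding dd_def by (rule Gm_norm)
    also have "\<dots> \<le> dd * M1 * norm v"
      using M1(2) that dd by (intro mult_right_mono mult_left_mono) auto
    finally show ?thesis .
  qed
  have P2: "\<exists>L>0. \<forall>\<mu>\<in>P2 K. \<forall>\<nu>\<in>P2 K. \<forall>x\<in>K. norm (vMMD Phi \<pi> \<mu> x - vMMD Phi \<pi> \<nu> x) \<le> L * W2 \<mu> \<nu>"
  proof (intro exI[of _ "dd * M1 * M1"] conjI ballI)
    show "dd * M1 * M1 > 0" using dd M1 by simp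
    fix \<mu> \<nu> x assume mu: "\<mu> \<in> P2 K" and nu: "\<nu> \<in> P2 K" and x: "x \<in> K"
    have "vMMD Phi \<pi> \<mu> x - vMMD Phi \<pi> \<nu> x = Gm (DPhi x) (kme Phi \<mu> - kme Phi \<nu>)"
      unfolding vMMD_eq[OF mu] vMMD_eq[OF nu] Gm_diff_right by simp
    also have "norm \<dots> \<le> dd * M1 * norm (kme Phi \<mu> - kme Phi \<nu>)" by (rule Gm_bnd[OF x])
    also have "\<dots> \<le> dd * M1 * (M1 * W2 \<mu> \<nu>)"
      using kme_lip[OF mu nu] dd M1 by (intro mult_left_mono) auto
    finally show "norm (vMMD Phi \<pi> \<mu> x - vMMD Phi \<pi> \<nu> x) \<le> dd * M1 * M1 * W2 \<mu> \<nu>" by (simp add: ac_simps)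
  qed
  have P3: "\<exists>l>0. \<forall>\<mu>\<in>P2 K. l-lipschitz_on K (grad (ev Phi (fmp Phi lam \<mu> \<pi>)))"
  proof (intro exI[of _ "dd * M2 * Bf + 1"] conjI ballI)
    show "dd * M2 * Bf + 1 > 0" using dd M2 Bf by (simp add: add_pos_nonneg)
    fix \<mu> assume mu: "\<mu> \<in> P2 K"
    show "(dd * M2 * Bf + 1)-lipschitz_on K (grad (ev Phi (fmp Phi lam \<mu> \<pi>)))"
    proof (rule lipschitz_onI)
      fix x y assume xy: "x \<in> K" "y \<in> K"
      have "dist (grad (ev Phi (fmp Phi lam \<mu> \<pi>)) x) (grad (ev Phi (fmp Phi lam \<mu> \<pi>)) y)
           \<le> dd * M2 * norm (fmp Phi lam \<mu> \<pi>) * norm (x - y)"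
        unfolding dist_norm grad_f dd_def using Gm_lip[OF LipD[OF xy]] M2 by simp
      also have "\<dots> \<le> (dd * M2 * Bf + 1) * dist x y"
        unfolding dist_norm by (rule scale_le[OF fmp_bnd[OF mu]]) (use dd M2 in auto)
      finally show "dist (grad (ev Phi (fmp Phi lam \<mu> \<pi>)) x) (grad (ev Phi (fmp Phi lam \<mu> \<pi>)) y)
           \<le> (dd * M2 * Bf + 1) * dist x y" .
    qed (use dd M2 Bf in simp)
  qed
  define La where "La = 2 * dd * M1 * M2 * Bf + 1"
  have La: "La > 0" using dd M1 M2 Bf by (simp add: La_def add_pos_nonneg)
  have Sdiff: "norm (Sexp DPhi \<mu> g - Sexp DPhi \<nu> g) \<le> La * W2 \<mu> \<nu>"
    if mu: "\<mu> \<in> P2 K" and nu: "\<nu> \<in> P2 K" and g: "norm g \<le> Bf" for \<mu> \<nu> g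
    unfolding Sexp_def
  proof (rule W2_bound[OF _ K(1) La _ mu nu])
    show "continuous_on UNIV (\<lambda>x. blinfun_apply (DPhi x) (Gm (DPhi x) g))"
      by (intro cont_apply cD cont_Gm continuous_on_const)
    show "\<forall>x\<in>K. \<forall>y\<in>K. norm (blinfun_apply (DPhi x) (Gm (DPhi x) g) - blinfun_apply (DPhi y) (Gm (DPhi y) g))
            \<le> La * norm (x - y)"
    proof (intro ballI)
      fix x y assume x: "x \<in> K" and y: "y \<in> K"
      have e: "blinfun_apply (DPhi x) (Gm (DPhi x) g) - blinfun_apply (DPhi y) (Gm (DPhi y) g)
          = blinfun_apply (DPhi x - DPhi y) (Gm (DPhi x) g) + blinfun_apply (DPhi y) (Gm (DPhi x) g - Gm (DPhi y) g)"
        by (simp add: blinfun.diff_left blinfun.diff_right)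
      have n1: "norm (blinfun_apply (DPhi x - DPhi y) (Gm (DPhi x) g)) \<le> (M2 * norm (x - y)) * (dd * M1 * Bf)"
      proof -
        have "norm (blinfun_apply (DPhi x - DPhi y) (Gm (DPhi x) g)) \<le> norm (DPhi x - DPhi y) * norm (Gm (DPhi x) g)"
          by (rule norm_blinfun)
        also have "\<dots> \<le> (M2 * norm (x - y)) * (dd * M1 * Bf)"
        proof (rule mult_mono)
          show "norm (DPhi x - DPhi y) \<le> M2 * norm (x - y)" by (rule LipD[OF x y])
          show "norm (Gm (DPhi x) g) \<le> dd * M1 * Bf"
            using Gm_bnd[OF x, of g] g dd M1 by (smt (verit) mult_left_mono mult_pos_pos)
        qed (use M2 in auto)
        finally show ?thesis .
      qed
      have n2: "norm (blinfun_apply (DPhi y) (Gm (DPhi x) g - Gm (DPhi y) g)) \<le> M1 * (dd * M2 * Bf * norm (x - y))"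
      proof -
        have "norm (blinfun_apply (DPhi y) (Gm (DPhi x) g - Gm (DPhi y) g)) \<le> norm (DPhi y) * norm (Gm (DPhi x) g - Gm (DPhi y) g)"
          by (rule norm_blinfun)
        also have "\<dots> \<le> M1 * (dd * M2 * Bf * norm (x - y))"
        proof (rule mult_mono)
          show "norm (DPhi y) \<le> M1" using M1(2) y by auto
          have "norm (Gm (DPhi x) g - Gm (DPhi y) g) \<le> dd * M2 * norm g * norm (x - y)"
            unfolding dd_def by (rule Gm_lip[OF LipD[OF x y]]) (use M2 in simp)
          also have "\<dots> \<le> dd * M2 * Bf * norm (x - y)"
            using g dd M2 by (intro mult_right_mono mult_left_mono) auto
          finally show "norm (Gm (DPhi x) g - Gm (DPhi y) g) \<le> dd * M2 * Bf * norm (x - y)" .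
        qed (use M1 in auto)
        finally show ?thesis .
      qed
      have "norm (blinfun_apply (DPhi x) (Gm (DPhi x) g) - blinfun_apply (DPhi y) (Gm (DPhi y) g))
          \<le> (M2 * norm (x - y)) * (dd * M1 * Bf) + M1 * (dd * M2 * Bf * norm (x - y))"
        unfolding e using norm_triangle_ineq[of "blinfun_apply (DPhi x - DPhi y) (Gm (DPhi x) g)"
            "blinfun_apply (DPhi y) (Gm (DPhi x) g - Gm (DPhi y) g)"] n1 n2 by linarith
      also have "\<dots> = (2 * dd * M1 * M2 * Bf) * norm (x - y)" by (simp add: algebra_simps)
      also have "\<dots> \<le> La * norm (x - y)" unfolding La_def by (simp add: mult_right_mono)
      finally show "norm (blinfun_apply (DPhi x) (Gm (DPhi x) g) - blinfun_apply (DPhi y) (Gm (DPhi y) g))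
            \<le> La * norm (x - y)" .
    qed
  qed
  have P4: "\<exists>L>0. \<forall>\<mu>\<in>P2 K. \<forall>\<nu>\<in>P2 K. \<forall>x\<in>K.
              norm (grad (ev Phi (fmp Phi lam \<mu> \<pi>)) x - grad (ev Phi (fmp Phi lam \<nu> \<pi>)) x)
                \<le> L * W2 \<mu> \<nu>"
  proof (intro exI[of _ "dd * M1 * ((M1 + La) / lam)"] conjI ballI)
    show "dd * M1 * ((M1 + La) / lam) > 0" using dd M1 La lam by simp
    fix \<mu> \<nu> x assume mu: "\<mu> \<in> P2 K" and nu: "\<nu> \<in> P2 K" and x: "x \<in> K"
    define f1 where "f1 = fmp Phi lam \<mu> \<pi>"
    define f2 where "f2 = fmp Phi lam \<nu> \<pi>"
    define w where "w = f1 - f2"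
    have e1: "Sexp DPhi \<mu> f1 = kme Phi \<mu> - mpi - lam *\<^sub>R f1" using fmp_eq[OF mu] unfolding f1_def by (simp add: algebra_simps)
    have e2: "Sexp DPhi \<nu> f2 = kme Phi \<nu> - mpi - lam *\<^sub>R f2" using fmp_eq[OF nu] unfolding f2_def by (simp add: algebra_simps)
    have Tw: "Sexp DPhi \<mu> w + lam *\<^sub>R w = (kme Phi \<mu> - kme Phi \<nu>) - (Sexp DPhi \<mu> f2 - Sexp DPhi \<nu> f2)"
      unfolding w_def Sexp_lin[OF cD K(1) mu] e1 e2 by (simp add: algebra_simps)
    have "lam * norm w \<le> norm (Sexp DPhi \<mu> w + lam *\<^sub>R w)" by (rule solve_bnd[OF mu])
    also have "\<dots> \<le> norm (kme Phi \<mu> - kme Phi \<nu>) + norm (Sexp DPhi \<mu> f2 - Sexp DPhi \<nu> f2)"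
      unfolding Tw by (rule norm_triangle_ineq4)
    also have "\<dots> \<le> M1 * W2 \<mu> \<nu> + La * W2 \<mu> \<nu>"
      using kme_lip[OF mu nu] Sdiff[OF mu nu fmp_bnd[OF nu]] unfolding f2_def by linarith
    finally have "lam * norm w \<le> (M1 + La) * W2 \<mu> \<nu>" by (simp add: algebra_simps)
    then have wb: "norm w \<le> (M1 + La) / lam * W2 \<mu> \<nu>" using lam by (simp add: field_simps)
    have "grad (ev Phi f1) x - grad (ev Phi f2) x = Gm (DPhi x) w"
      unfolding grad_f w_def by (rule Gm_diff_right)
    also have "norm \<dots> \<le> dd * M1 * norm w" by (rule Gm_bnd[OF x])
    also have "\<dots> \<le> dd * M1 * ((M1 + La) / lam * W2 \<mu> \<nu>)"
      using wb dd M1 by (intro mult_left_mono) auto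
    finally show "norm (grad (ev Phi (fmp Phi lam \<mu> \<pi>)) x - grad (ev Phi (fmp Phi lam \<nu> \<pi>)) x)
                \<le> dd * M1 * ((M1 + La) / lam) * W2 \<mu> \<nu>" unfolding f1_def f2_def by (simp add: ac_simps)
  qed
  show ?thesis using P1 P2 P3 P4 unfolding K_def by blast
qed

end
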